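(* Let $R$ be a commutative ring with identity and $S$ a multiplicative subset of $R$. Let $\xi: 0\rightarrow A\xrightarrow{f} B\xrightarrow{g} C\rightarrow 0$ be a $u$-$S$-split short $u$-$S$-exact sequence of $R$-modules. Then $\xi$ is $u$-$S$-pure.
   Context: A multiplicative subset $S$ satisfies $1\in S$ and is closed under products. A short sequence $0\to A\xrightarrow{f}B\xrightarrow{g}C\to 0$ is $u$-$S$-exact if there is $s\in S$ with $s\,\mathrm{Ker}(f)=0$, $s\,\mathrm{Ker}(g)\subseteq\mathrm{Im}(f)$, $s\,\mathrm{Im}(f)\subseteq\mathrm{Ker}(g)$, $sC\subseteq\mathrm{Im}(g)$. Such a sequence is $u$-$S$-split if there are $s\in S$ and an $R$-homomorphism $t:B\to A$ with $tf=s\,\mathrm{Id}_A$. It is $u$-$S$-pure if for every $R$-module $M$ the induced sequence $0\rightarrow M\otimes_RA\rightarrow M\otimes_RB\rightarrow M\otimes_RC\rightarrow 0$ is $u$-$S$-exact. *)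

theory Defs
  imports "HOL-Algebra.Module" "HOL-Algebra.Generated_Groups"
begin

definition mult_subset :: "('r, 'x) ring_scheme \<Rightarrow> 'r set \<Rightarrow> bool" where
  "mult_subset R S \<longleftrightarrow> S \<subseteq> carrier R \<and> \<one>\<^bsub>R\<^esub> \<in> S \<and>
     (\<forall>s\<in>S. \<forall>t\<in>S. s \<otimes>\<^bsub>R\<^esub> t \<in> S)"

definition mod_hom :: "('r, 'x) ring_scheme \<Rightarrow> ('r, 'a, 'y) module_scheme
    \<Rightarrow> ('r, 'b, 'z) module_scheme \<Rightarrow> ('a \<Rightarrow> 'b) \<Rightarrow> bool" where
  "mod_hom R M N h \<longleftrightarrow> h \<in> carrier M \<rightarrow> carrier N \<and>
     (\<forall>x\<in>carrier M. \<forall>y\<in>carrier M. h (x \<oplus>\<^bsub>M\<^esub> y) = h x \<oplus>\<^bsub>N\<^esub> h y) \<and>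
     (\<forall>r\<in>carrier R. \<forall>x\<in>carrier M. h (r \<odot>\<^bsub>M\<^esub> x) = r \<odot>\<^bsub>N\<^esub> h x)"

definition mod_ker :: "('r, 'a, 'y) module_scheme \<Rightarrow> ('r, 'b, 'z) module_scheme
    \<Rightarrow> ('a \<Rightarrow> 'b) \<Rightarrow> 'a set" where
  "mod_ker M N h = {x \<in> carrier M. h x = \<zero>\<^bsub>N\<^esub>}"

definition mod_im :: "('r, 'a, 'y) module_scheme \<Rightarrow> ('a \<Rightarrow> 'b) \<Rightarrow> 'b set" where
  "mod_im M h = h ` carrier M"

definition u_S_exact :: "('r, 'x) ring_scheme \<Rightarrow> 'r set
    \<Rightarrow> ('r, 'a, 'y1) module_scheme \<Rightarrow> ('r, 'b, 'y2) module_scheme \<Rightarrow> ('r, 'c, 'y3) module_scheme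
    \<Rightarrow> ('a \<Rightarrow> 'b) \<Rightarrow> ('b \<Rightarrow> 'c) \<Rightarrow> bool" where
  "u_S_exact R S A B C f g \<longleftrightarrow> (\<exists>s\<in>S.
     (\<forall>x\<in>mod_ker A B f. s \<odot>\<^bsub>A\<^esub> x = \<zero>\<^bsub>A\<^esub>) \<and>
     (\<forall>x\<in>mod_ker B C g. s \<odot>\<^bsub>B\<^esub> x \<in> mod_im A f) \<and>
     (\<forall>x\<in>mod_im A f. s \<odot>\<^bsub>B\<^esub> x \<in> mod_ker B C g) \<and>
     (\<forall>x\<in>carrier C. s \<odot>\<^bsub>C\<^esub> x \<in> mod_im B g))"

definition u_S_split :: "('r, 'x) ring_scheme \<Rightarrow> 'r set
    \<Rightarrow> ('r, 'a, 'y1) module_scheme \<Rightarrow> ('r, 'b, 'y2) module_scheme \<Rightarrow> ('a \<Rightarrow> 'b) \<Rightarrow> bool" where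
  "u_S_split R S A B f \<longleftrightarrow> (\<exists>s\<in>S. \<exists>t. mod_hom R B A t \<and>
     (\<forall>a\<in>carrier A. t (f a) = s \<odot>\<^bsub>A\<^esub> a))"

definition bilinear_map :: "('r, 'x) ring_scheme \<Rightarrow> ('r, 'm, 'y1) module_scheme
    \<Rightarrow> ('r, 'a, 'y2) module_scheme \<Rightarrow> ('r, 'n, 'y3) module_scheme \<Rightarrow> ('m \<Rightarrow> 'a \<Rightarrow> 'n) \<Rightarrow> bool" where
  "bilinear_map R M A N \<phi> \<longleftrightarrow>
     (\<forall>m\<in>carrier M. \<forall>a\<in>carrier A. \<phi> m a \<in> carrier N) \<and>
     (\<forall>m1\<in>carrier M. \<forall>m2\<in>carrier M. \<forall>a\<in>carrier A.
        \<phi> (m1 \<oplus>\<^bsub>M\<^esub> m2) a = \<phi> m1 a \<oplus>\<^bsub>N\<^esub> \<phi> m2 a) \<and>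
     (\<forall>m\<in>carrier M. \<forall>a1\<in>carrier A. \<forall>a2\<in>carrier A.
        \<phi> m (a1 \<oplus>\<^bsub>A\<^esub> a2) = \<phi> m a1 \<oplus>\<^bsub>N\<^esub> \<phi> m a2) \<and>
     (\<forall>r\<in>carrier R. \<forall>m\<in>carrier M. \<forall>a\<in>carrier A.
        \<phi> (r \<odot>\<^bsub>M\<^esub> m) a = r \<odot>\<^bsub>N\<^esub> \<phi> m a \<and> \<phi> m (r \<odot>\<^bsub>A\<^esub> a) = r \<odot>\<^bsub>N\<^esub> \<phi> m a)"

text \<open>Since HOL cannot quantify over types inside a formula, the universal
  property is required for target modules whose elements have the type
  ('m \<times> 'a \<Rightarrow> 'r) set; this type is large enough to carry the standard
  construction (cosets of finitely supported formal combinations), so together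
  with generation this characterises T up to unique isomorphism, exactly as
  the usual universal property does.\<close>
definition tensor_product :: "('r, 'x) ring_scheme \<Rightarrow> ('r, 'm, 'y1) module_scheme
    \<Rightarrow> ('r, 'a, 'y2) module_scheme \<Rightarrow> ('r, 't, 'y3) module_scheme \<Rightarrow> ('m \<Rightarrow> 'a \<Rightarrow> 't) \<Rightarrow> bool" where
  "tensor_product R M A T \<tau> \<longleftrightarrow>
     module R T \<and> bilinear_map R M A T \<tau> \<and>
     carrier T = generate (add_monoid T) {\<tau> m a | m a. m \<in> carrier M \<and> a \<in> carrier A} \<and>
     (\<forall>(N :: ('r, ('m \<times> 'a \<Rightarrow> 'r) set) module) \<phi>. module R N \<and> bilinear_map R M A N \<phi> \<longrightarrow>
        (\<exists>\<psi>. mod_hom R T N \<psi> \<and>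
           (\<forall>m\<in>carrier M. \<forall>a\<in>carrier A. \<psi> (\<tau> m a) = \<phi> m a)))"

end

theory Submission imports Defs begin


lemma mod_hom_closed:
  "mod_hom R M N h \<Longrightarrow> x \<in> carrier M \<Longrightarrow> h x \<in> carrier N"
  unfolding mod_hom_def by auto

lemma mod_hom_add:
  "mod_hom R M N h \<Longrightarrow> x \<in> carrier M \<Longrightarrow> y \<in> carrier M \<Longrightarrow> h (x \<oplus>\<^bsub>M\<^esub> y) = h x \<oplus>\<^bsub>N\<^esub> h y"
  unfolding mod_hom_def by auto

lemma mod_hom_smult:
  "mod_hom R M N h \<Longrightarrow> r \<in> carrier R \<Longrightarrow> x \<in> carrier M \<Longrightarrow> h (r \<odot>\<^bsub>M\<^esub> x) = r \<odot>\<^bsub>N\<^esub> h x"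
  unfolding mod_hom_def by auto

lemma mod_hom_zero:
  assumes "module R M" "module R N" "mod_hom R M N h"
  shows "h \<zero>\<^bsub>M\<^esub> = \<zero>\<^bsub>N\<^esub>"
proof -
  interpret M: module R M by fact
  interpret N: module R N by fact
  have "h \<zero>\<^bsub>M\<^esub> = h (\<zero>\<^bsub>R\<^esub> \<odot>\<^bsub>M\<^esub> \<zero>\<^bsub>M\<^esub>)" by simp
  also have "\<dots> = \<zero>\<^bsub>R\<^esub> \<odot>\<^bsub>N\<^esub> h \<zero>\<^bsub>M\<^esub>" by (rule mod_hom_smult[OF assms(3)]) simp_all
  also have "\<dots> = \<zero>\<^bsub>N\<^esub>" using assms(3) unfolding mod_hom_def by (simp add: Pi_iff)
  finally show ?thesis .
qed

lemma mod_hom_neg: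
  assumes "module R M" "module R N" "mod_hom R M N h" "x \<in> carrier M"
  shows "h (\<ominus>\<^bsub>M\<^esub> x) = \<ominus>\<^bsub>N\<^esub> h x"
proof -
  interpret M: module R M by fact
  interpret N: module R N by fact
  have hx: "h x \<in> carrier N" using assms(3,4) unfolding mod_hom_def by auto
  have "h (\<ominus>\<^bsub>M\<^esub> x) = h ((\<ominus>\<^bsub>R\<^esub> \<one>\<^bsub>R\<^esub>) \<odot>\<^bsub>M\<^esub> x)" using assms(4) by (simp add: M.smult_l_minus)
  also have "\<dots> = (\<ominus>\<^bsub>R\<^esub> \<one>\<^bsub>R\<^esub>) \<odot>\<^bsub>N\<^esub> h x" using assms(3,4) unfolding mod_hom_def by simp
  also have "\<dots> = \<ominus>\<^bsub>N\<^esub> h x" using hx by (simp add: N.smult_l_minus)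
  finally show ?thesis .
qed

lemma mod_hom_comp:
  "mod_hom R M N h \<Longrightarrow> mod_hom R N P k \<Longrightarrow> mod_hom R M P (\<lambda>x. k (h x))"
  unfolding mod_hom_def by (auto simp: Pi_iff)

lemma mod_hom_scal:
  assumes "module R M" "r \<in> carrier R"
  shows "mod_hom R M M (\<lambda>x. r \<odot>\<^bsub>M\<^esub> x)"
proof -
  interpret M: module R M by fact
  show ?thesis unfolding mod_hom_def
  proof (intro conjI ballI)
    show "(\<lambda>x. r \<odot>\<^bsub>M\<^esub> x) \<in> carrier M \<rightarrow> carrier M" using assms(2) by auto
  next
    fix x y assume "x \<in> carrier M" "y \<in> carrier M"
    then show "r \<odot>\<^bsub>M\<^esub> (x \<oplus>\<^bsub>M\<^esub> y) = r \<odot>\<^bsub>M\<^esub> x \<oplus>\<^bsub>M\<^esub> r \<odot>\<^bsub>M\<^esub> y"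
      by (rule M.smult_r_distr[OF assms(2)])
  next
    fix a x assume a: "a \<in> carrier R" and x: "x \<in> carrier M"
    have "r \<odot>\<^bsub>M\<^esub> (a \<odot>\<^bsub>M\<^esub> x) = (r \<otimes>\<^bsub>R\<^esub> a) \<odot>\<^bsub>M\<^esub> x" by (rule M.smult_assoc1[OF assms(2) a x, symmetric])
    also have "r \<otimes>\<^bsub>R\<^esub> a = a \<otimes>\<^bsub>R\<^esub> r" by (rule M.m_comm[OF assms(2) a])
    also have "(a \<otimes>\<^bsub>R\<^esub> r) \<odot>\<^bsub>M\<^esub> x = a \<odot>\<^bsub>M\<^esub> (r \<odot>\<^bsub>M\<^esub> x)" by (rule M.smult_assoc1[OF a assms(2) x])
    finally show "r \<odot>\<^bsub>M\<^esub> (a \<odot>\<^bsub>M\<^esub> x) = a \<odot>\<^bsub>M\<^esub> (r \<odot>\<^bsub>M\<^esub> x)" .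
  qed
qed

lemma mod_hom_plus:
  assumes "module R M" "module R N" "mod_hom R M N h" "mod_hom R M N k"
  shows "mod_hom R M N (\<lambda>x. h x \<oplus>\<^bsub>N\<^esub> k x)"
proof -
  interpret M: module R M by fact
  interpret N: module R N by fact
  have hC: "\<And>x. x \<in> carrier M \<Longrightarrow> h x \<in> carrier N" using assms(3) by (rule mod_hom_closed)
  have kC: "\<And>x. x \<in> carrier M \<Longrightarrow> k x \<in> carrier N" using assms(4) by (rule mod_hom_closed)
  show ?thesis unfolding mod_hom_def
  proof (intro conjI ballI)
    show "(\<lambda>x. h x \<oplus>\<^bsub>N\<^esub> k x) \<in> carrier M \<rightarrow> carrier N" using hC kC by (simp add: Pi_iff)
  next
    fix x y assume x: "x \<in> carrier M" and y: "y \<in> carrier M"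
    have "h (x \<oplus>\<^bsub>M\<^esub> y) \<oplus>\<^bsub>N\<^esub> k (x \<oplus>\<^bsub>M\<^esub> y) = (h x \<oplus>\<^bsub>N\<^esub> h y) \<oplus>\<^bsub>N\<^esub> (k x \<oplus>\<^bsub>N\<^esub> k y)"
      by (simp only: mod_hom_add[OF assms(3) x y] mod_hom_add[OF assms(4) x y])
    also have "\<dots> = (h x \<oplus>\<^bsub>N\<^esub> k x) \<oplus>\<^bsub>N\<^esub> (h y \<oplus>\<^bsub>N\<^esub> k y)"
      using hC[OF x] hC[OF y] kC[OF x] kC[OF y] by (simp add: N.a_ac)
    finally show "h (x \<oplus>\<^bsub>M\<^esub> y) \<oplus>\<^bsub>N\<^esub> k (x \<oplus>\<^bsub>M\<^esub> y) = (h x \<oplus>\<^bsub>N\<^esub> k x) \<oplus>\<^bsub>N\<^esub> (h y \<oplus>\<^bsub>N\<^esub> k y)" .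
  next
    fix r x assume r: "r \<in> carrier R" and x: "x \<in> carrier M"
    show "h (r \<odot>\<^bsub>M\<^esub> x) \<oplus>\<^bsub>N\<^esub> k (r \<odot>\<^bsub>M\<^esub> x) = r \<odot>\<^bsub>N\<^esub> (h x \<oplus>\<^bsub>N\<^esub> k x)"
      by (simp only: mod_hom_smult[OF assms(3) r x] mod_hom_smult[OF assms(4) r x] N.smult_r_distr[OF r hC[OF x] kC[OF x]])
  qed
qed

lemma mod_hom_0:
  assumes "module R N"
  shows "mod_hom R M N (\<lambda>x. \<zero>\<^bsub>N\<^esub>)"
proof -
  interpret N: module R N by fact
  show ?thesis unfolding mod_hom_def by auto
qed

lemma bilinear_zero1:
  assumes "module R M" "module R A" "module R N" "bilinear_map R M A N \<phi>" "a \<in> carrier A"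
  shows "\<phi> \<zero>\<^bsub>M\<^esub> a = \<zero>\<^bsub>N\<^esub>"
proof -
  interpret M: module R M by fact
  interpret N: module R N by fact
  have "\<phi> \<zero>\<^bsub>M\<^esub> a = \<phi> (\<zero>\<^bsub>R\<^esub> \<odot>\<^bsub>M\<^esub> \<zero>\<^bsub>M\<^esub>) a" by simp
  also have "\<dots> = \<zero>\<^bsub>R\<^esub> \<odot>\<^bsub>N\<^esub> \<phi> \<zero>\<^bsub>M\<^esub> a" using assms(4,5) M.zero_closed M.R.zero_closed unfolding bilinear_map_def by blast
  also have "\<dots> = \<zero>\<^bsub>N\<^esub>" using assms(4,5) unfolding bilinear_map_def by simp
  finally show ?thesis .
qed

lemma bilinear_zero2:
  assumes "module R M" "module R A" "module R N" "bilinear_map R M A N \<phi>" "m \<in> carrier M"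
  shows "\<phi> m \<zero>\<^bsub>A\<^esub> = \<zero>\<^bsub>N\<^esub>"
proof -
  interpret A: module R A by fact
  interpret N: module R N by fact
  have "\<phi> m \<zero>\<^bsub>A\<^esub> = \<phi> m (\<zero>\<^bsub>R\<^esub> \<odot>\<^bsub>A\<^esub> \<zero>\<^bsub>A\<^esub>)" by simp
  also have "\<dots> = \<zero>\<^bsub>R\<^esub> \<odot>\<^bsub>N\<^esub> \<phi> m \<zero>\<^bsub>A\<^esub>" using assms(4,5) A.zero_closed A.R.zero_closed unfolding bilinear_map_def by blast
  also have "\<dots> = \<zero>\<^bsub>N\<^esub>" using assms(4,5) unfolding bilinear_map_def by simp
  finally show ?thesis .
qed

lemma tensor_productD:
  fixes R :: "('r,'x) ring_scheme" and M :: "('r,'m,'y1) module_scheme" and A :: "('r,'a,'y2) module_scheme"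
    and T :: "('r,'t,'y3) module_scheme"
  assumes "tensor_product R M A T \<tau>"
  shows tensor_product_module: "module R T"
    and tensor_product_bil: "bilinear_map R M A T \<tau>"
    and tensor_product_gen: "carrier T = generate (add_monoid T) {\<tau> m a | m a. m \<in> carrier M \<and> a \<in> carrier A}"
    and tensor_product_UP: "\<And>(N :: ('r, ('m \<times> 'a \<Rightarrow> 'r) set) module) \<phi>. module R N \<Longrightarrow> bilinear_map R M A N \<phi> \<Longrightarrow>
        (\<exists>\<psi>. mod_hom R T N \<psi> \<and> (\<forall>m\<in>carrier M. \<forall>a\<in>carrier A. \<psi> (\<tau> m a) = \<phi> m a))"
proof -
  have H: "module R T \<and> bilinear_map R M A T \<tau> \<and>
     carrier T = generate (add_monoid T) {\<tau> m a | m a. m \<in> carrier M \<and> a \<in> carrier A} \<and>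
     (\<forall>(N :: ('r, ('m \<times> 'a \<Rightarrow> 'r) set) module) \<phi>. module R N \<and> bilinear_map R M A N \<phi> \<longrightarrow>
        (\<exists>\<psi>. mod_hom R T N \<psi> \<and> (\<forall>m\<in>carrier M. \<forall>a\<in>carrier A. \<psi> (\<tau> m a) = \<phi> m a)))"
    using assms unfolding tensor_product_def .
  show "module R T" using H by (rule conjunct1)
  show "bilinear_map R M A T \<tau>" using H[THEN conjunct2] by (rule conjunct1)
  show "carrier T = generate (add_monoid T) {\<tau> m a | m a. m \<in> carrier M \<and> a \<in> carrier A}"
    using H[THEN conjunct2, THEN conjunct2] by (rule conjunct1)
  fix N :: "('r, ('m \<times> 'a \<Rightarrow> 'r) set) module" and \<phi>
  assume "module R N" "bilinear_map R M A N \<phi>"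
  then show "\<exists>\<psi>. mod_hom R T N \<psi> \<and> (\<forall>m\<in>carrier M. \<forall>a\<in>carrier A. \<psi> (\<tau> m a) = \<phi> m a)"
    using H[THEN conjunct2, THEN conjunct2, THEN conjunct2] by blast
qed

lemma tensor_product_mem:
  fixes R :: "('r,'x) ring_scheme" and M :: "('r,'m,'y1) module_scheme" and A :: "('r,'a,'y2) module_scheme"
    and T :: "('r,'t,'y3) module_scheme"
  assumes "tensor_product R M A T \<tau>"
  shows "y \<in> carrier T \<longleftrightarrow> y \<in> generate (add_monoid T) {\<tau> m a | m a. m \<in> carrier M \<and> a \<in> carrier A}"
  using arg_cong[where f="\<lambda>S. y \<in> S", OF tensor_product_gen[OF assms]] by (simp only:)

lemma tensor_ext:
  assumes "module R T" "module R N" "tensor_product R M A T \<tau>"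
    "mod_hom R T N h" "mod_hom R T N k"
    "\<And>m a. m \<in> carrier M \<Longrightarrow> a \<in> carrier A \<Longrightarrow> h (\<tau> m a) = k (\<tau> m a)"
    "x \<in> carrier T"
  shows "h x = k x"
proof -
  interpret T: module R T by fact
  interpret N: module R N by fact
  let ?X = "{\<tau> m a | m a. m \<in> carrier M \<and> a \<in> carrier A}"
  note ceq = tensor_product_mem[OF assms(3)]
  have "x \<in> generate (add_monoid T) ?X" using assms(7) ceq by (simp only:)
  then show ?thesis
  proof (induction x rule: generate.induct)
    case one
    have "h \<zero>\<^bsub>T\<^esub> = k \<zero>\<^bsub>T\<^esub>" by (simp only: mod_hom_zero[OF assms(1,2,4)] mod_hom_zero[OF assms(1,2,5)])
    then show ?case by simp
  next
    case (incl y)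
    then obtain m a where "m \<in> carrier M" "a \<in> carrier A" "y = \<tau> m a" by blast
    then show ?case using assms(6) by simp
  next
    case (inv y)
    have yX: "y \<in> ?X" by (rule inv)
    have "y \<in> generate (add_monoid T) ?X" by (rule generate.incl[OF yX])
    then have yc: "y \<in> carrier T" using ceq by (simp only:)
    obtain m a where ma: "m \<in> carrier M" "a \<in> carrier A" "y = \<tau> m a" using yX by blast
    have hk: "h y = k y" using ma assms(6) by simp
    have "inv\<^bsub>add_monoid T\<^esub> y = \<ominus>\<^bsub>T\<^esub> y" by (simp add: a_inv_def)
    then show ?case by (simp only: mod_hom_neg[OF assms(1,2,4) yc] mod_hom_neg[OF assms(1,2,5) yc] hk)
  next
    case (eng y z)
    have "y \<in> carrier T" "z \<in> carrier T" using eng.hyps(1,2) ceq by (simp_all only:)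
    then show ?case using eng.IH mod_hom_add[OF assms(4)] mod_hom_add[OF assms(5)] by simp
  qed
qed

definition transp :: "('r,'n) module \<Rightarrow> ('n \<Rightarrow> 'X) \<Rightarrow> ('r,'X) module" where
 "transp N e = \<lparr>carrier = e ` carrier N, mult = (\<lambda>x y. x), one = e \<zero>\<^bsub>N\<^esub>, zero = e \<zero>\<^bsub>N\<^esub>,
    add = (\<lambda>x y. e (inv_into (carrier N) e x \<oplus>\<^bsub>N\<^esub> inv_into (carrier N) e y)),
    smult = (\<lambda>r x. e (r \<odot>\<^bsub>N\<^esub> inv_into (carrier N) e x))\<rparr>"

lemma transp_simps:
  "carrier (transp N e) = e ` carrier N"
  "\<zero>\<^bsub>transp N e\<^esub> = e \<zero>\<^bsub>N\<^esub>"
  "x \<oplus>\<^bsub>transp N e\<^esub> y = e (inv_into (carrier N) e x \<oplus>\<^bsub>N\<^esub> inv_into (carrier N) e y)"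
  "r \<odot>\<^bsub>transp N e\<^esub> x = e (r \<odot>\<^bsub>N\<^esub> inv_into (carrier N) e x)"
  unfolding transp_def by simp_all

lemma transp_module:
  assumes "module R N" "inj_on e (carrier N)"
  shows "module R (transp N e)"
proof -
  interpret N: module R N by fact
  have ie: "\<And>x. x \<in> carrier N \<Longrightarrow> inv_into (carrier N) e (e x) = x"
    using assms(2) by (simp add: inv_into_f_f)
  show ?thesis
  proof (rule moduleI)
    show "cring R" by (rule N.is_cring)
    show "abelian_group (transp N e)"
    proof (rule abelian_groupI)
      show "\<And>x y. x \<in> carrier (transp N e) \<Longrightarrow> y \<in> carrier (transp N e) \<Longrightarrow> x \<oplus>\<^bsub>transp N e\<^esub> y \<in> carrier (transp N e)"
        by (auto simp: transp_simps ie)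
      show "\<zero>\<^bsub>transp N e\<^esub> \<in> carrier (transp N e)" by (auto simp: transp_simps)
      show "\<And>x y z. x \<in> carrier (transp N e) \<Longrightarrow> y \<in> carrier (transp N e) \<Longrightarrow> z \<in> carrier (transp N e) \<Longrightarrow> x \<oplus>\<^bsub>transp N e\<^esub> y \<oplus>\<^bsub>transp N e\<^esub> z = x \<oplus>\<^bsub>transp N e\<^esub> (y \<oplus>\<^bsub>transp N e\<^esub> z)"
        by (auto simp: transp_simps ie N.a_assoc)
      show "\<And>x y. x \<in> carrier (transp N e) \<Longrightarrow> y \<in> carrier (transp N e) \<Longrightarrow> x \<oplus>\<^bsub>transp N e\<^esub> y = y \<oplus>\<^bsub>transp N e\<^esub> x"
        by (auto simp: transp_simps ie N.a_comm)
      show "\<And>x. x \<in> carrier (transp N e) \<Longrightarrow> \<zero>\<^bsub>transp N e\<^esub> \<oplus>\<^bsub>transp N e\<^esub> x = x"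
        by (auto simp: transp_simps ie)
      show "\<And>x. x \<in> carrier (transp N e) \<Longrightarrow> \<exists>y\<in>carrier (transp N e). y \<oplus>\<^bsub>transp N e\<^esub> x = \<zero>\<^bsub>transp N e\<^esub>"
      proof -
        fix x assume "x \<in> carrier (transp N e)"
        then obtain a where a: "a \<in> carrier N" "x = e a" by (auto simp: transp_simps)
        show "\<exists>y\<in>carrier (transp N e). y \<oplus>\<^bsub>transp N e\<^esub> x = \<zero>\<^bsub>transp N e\<^esub>"
          by (rule bexI[where x="e (\<ominus>\<^bsub>N\<^esub> a)"]) (use a in \<open>auto simp: transp_simps ie N.l_neg\<close>)
      qed
    qed
    show "\<And>a x. a \<in> carrier R \<Longrightarrow> x \<in> carrier (transp N e) \<Longrightarrow> a \<odot>\<^bsub>transp N e\<^esub> x \<in> carrier (transp N e)"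
      by (auto simp: transp_simps ie)
    show "\<And>a b x. a \<in> carrier R \<Longrightarrow> b \<in> carrier R \<Longrightarrow> x \<in> carrier (transp N e) \<Longrightarrow> (a \<oplus>\<^bsub>R\<^esub> b) \<odot>\<^bsub>transp N e\<^esub> x = a \<odot>\<^bsub>transp N e\<^esub> x \<oplus>\<^bsub>transp N e\<^esub> b \<odot>\<^bsub>transp N e\<^esub> x"
      by (auto simp: transp_simps ie N.smult_l_distr)
    show "\<And>a x y. a \<in> carrier R \<Longrightarrow> x \<in> carrier (transp N e) \<Longrightarrow> y \<in> carrier (transp N e) \<Longrightarrow> a \<odot>\<^bsub>transp N e\<^esub> (x \<oplus>\<^bsub>transp N e\<^esub> y) = a \<odot>\<^bsub>transp N e\<^esub> x \<oplus>\<^bsub>transp N e\<^esub> a \<odot>\<^bsub>transp N e\<^esub> y"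
      by (auto simp: transp_simps ie N.smult_r_distr)
    show "\<And>a b x. a \<in> carrier R \<Longrightarrow> b \<in> carrier R \<Longrightarrow> x \<in> carrier (transp N e) \<Longrightarrow> (a \<otimes>\<^bsub>R\<^esub> b) \<odot>\<^bsub>transp N e\<^esub> x = a \<odot>\<^bsub>transp N e\<^esub> (b \<odot>\<^bsub>transp N e\<^esub> x)"
      by (auto simp: transp_simps ie N.smult_assoc1)
    show "\<And>x. x \<in> carrier (transp N e) \<Longrightarrow> \<one>\<^bsub>R\<^esub> \<odot>\<^bsub>transp N e\<^esub> x = x"
      by (auto simp: transp_simps ie)
  qed
qed



lemma UP_general:
  fixes R :: "'r ring" and M :: "('r,'m) module" and B :: "('r,'b) module"
    and T :: "('r,'t) module" and N :: "('r,'n) module"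
  assumes RM: "module R M" and RB: "module R B" and TP: "tensor_product R M B T \<tau>"
    and RN: "module R N" and BL: "bilinear_map R M B N \<phi>"
  shows "\<exists>\<psi>. mod_hom R T N \<psi> \<and> (\<forall>m\<in>carrier M. \<forall>b\<in>carrier B. \<psi> (\<tau> m b) = \<phi> m b)"
proof -
  interpret M: module R M by fact
  interpret B: module R B by fact
  interpret N: module R N by fact
  have phiC: "\<And>m b. m\<in>carrier M \<Longrightarrow> b\<in>carrier B \<Longrightarrow> \<phi> m b \<in> carrier N"
    using BL unfolding bilinear_map_def by blast
  have phiadd: "\<And>m1 m2 b. m1\<in>carrier M \<Longrightarrow> m2\<in>carrier M \<Longrightarrow> b\<in>carrier B \<Longrightarrow> \<phi> (m1 \<oplus>\<^bsub>M\<^esub> m2) b = \<phi> m1 b \<oplus>\<^bsub>N\<^esub> \<phi> m2 b"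
    using BL unfolding bilinear_map_def by blast
  have phiadd2: "\<And>m b1 b2. m\<in>carrier M \<Longrightarrow> b1\<in>carrier B \<Longrightarrow> b2\<in>carrier B \<Longrightarrow> \<phi> m (b1 \<oplus>\<^bsub>B\<^esub> b2) = \<phi> m b1 \<oplus>\<^bsub>N\<^esub> \<phi> m b2"
    using BL unfolding bilinear_map_def by blast
  have phism: "\<And>r m b. r\<in>carrier R \<Longrightarrow> m\<in>carrier M \<Longrightarrow> b\<in>carrier B \<Longrightarrow> \<phi> (r \<odot>\<^bsub>M\<^esub> m) b = r \<odot>\<^bsub>N\<^esub> \<phi> m b"
    using BL unfolding bilinear_map_def by blast
  have phism2: "\<And>r m b. r\<in>carrier R \<Longrightarrow> m\<in>carrier M \<Longrightarrow> b\<in>carrier B \<Longrightarrow> \<phi> m (r \<odot>\<^bsub>B\<^esub> b) = r \<odot>\<^bsub>N\<^esub> \<phi> m b"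
    using BL unfolding bilinear_map_def by blast
  show ?thesis
  proof (cases "\<one>\<^bsub>R\<^esub> = \<zero>\<^bsub>R\<^esub>")
    case True
    have triv: "y = \<zero>\<^bsub>N\<^esub>" if y: "y\<in>carrier N" for y
    proof -
      have "y = \<one>\<^bsub>R\<^esub> \<odot>\<^bsub>N\<^esub> y" by (rule N.smult_one[OF y, symmetric])
      also have "\<dots> = \<zero>\<^bsub>R\<^esub> \<odot>\<^bsub>N\<^esub> y" by (simp only: True)
      also have "\<dots> = \<zero>\<^bsub>N\<^esub>" by (rule N.smult_l_null[OF y])
      finally show ?thesis .
    qed
    have "mod_hom R T N (\<lambda>_. \<zero>\<^bsub>N\<^esub>)" by (rule mod_hom_0[OF RN])
    moreover have "\<forall>m\<in>carrier M. \<forall>b\<in>carrier B. \<zero>\<^bsub>N\<^esub> = \<phi> m b"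
      using triv[OF phiC] by simp
    ultimately show ?thesis by blast
  next
    case False
    define N0 where "N0 = {x. \<exists>D c. finite D \<and> D \<subseteq> carrier B \<and> c \<in> D \<rightarrow> carrier M \<and> x = finsum N (\<lambda>b. \<phi> (c b) b) D}"
    have fPi: "\<And>D c. D \<subseteq> carrier B \<Longrightarrow> c \<in> D \<rightarrow> carrier M \<Longrightarrow> (\<lambda>b. \<phi> (c b) b) \<in> D \<rightarrow> carrier N"
      using phiC by blast
    have N0sub: "N0 \<subseteq> carrier N"
    proof
      fix x assume "x \<in> N0"
      then obtain D c where D: "finite D" "D \<subseteq> carrier B" "c \<in> D \<rightarrow> carrier M" "x = finsum N (\<lambda>b. \<phi> (c b) b) D"
        unfolding N0_def by blast
      show "x \<in> carrier N" unfolding D(4) by (rule N.finsum_closed[OF fPi[OF D(2,3)]])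
    qed
    have N0zero: "\<zero>\<^bsub>N\<^esub> \<in> N0"
    proof -
      have "\<zero>\<^bsub>N\<^esub> = finsum N (\<lambda>b. \<phi> ((\<lambda>_. \<zero>\<^bsub>M\<^esub>) b) b) {}" by (simp only: N.finsum_empty)
      then show ?thesis unfolding N0_def by (intro CollectI exI[where x="{}"] exI[where x="\<lambda>_. \<zero>\<^bsub>M\<^esub>"] conjI) auto
    qed
    have N0smult: "r \<odot>\<^bsub>N\<^esub> x \<in> N0" if r: "r \<in> carrier R" and x: "x \<in> N0" for r x
    proof -
      obtain D c where D: "finite D" "D \<subseteq> carrier B" "c \<in> D \<rightarrow> carrier M" "x = finsum N (\<lambda>b. \<phi> (c b) b) D"
        using x unfolding N0_def by blast
      have "r \<odot>\<^bsub>N\<^esub> x = finsum N (\<lambda>b. r \<odot>\<^bsub>N\<^esub> \<phi> (c b) b) D"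
        using D r fPi[OF D(2,3)] by (simp add: N.finsum_smult_ldistr)
      also have "\<dots> = finsum N (\<lambda>b. \<phi> (r \<odot>\<^bsub>M\<^esub> c b) b) D"
        by (rule N.finsum_cong') (use D r phism phiC in \<open>auto simp: Pi_iff subset_iff\<close>)
      finally show ?thesis unfolding N0_def using D r by (intro CollectI exI[where x=D] exI[where x="\<lambda>b. r \<odot>\<^bsub>M\<^esub> c b"]) auto
    qed
    have N0add: "x \<oplus>\<^bsub>N\<^esub> y \<in> N0" if x: "x \<in> N0" and y: "y \<in> N0" for x y
    proof -
      obtain D c where D: "finite D" "D \<subseteq> carrier B" "c \<in> D \<rightarrow> carrier M" "x = finsum N (\<lambda>b. \<phi> (c b) b) D"
        using x unfolding N0_def by blast
      obtain D' c' where D': "finite D'" "D' \<subseteq> carrier B" "c' \<in> D' \<rightarrow> carrier M" "y = finsum N (\<lambda>b. \<phi> (c' b) b) D'"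
        using y unfolding N0_def by blast
      define c0 where "c0 b = (if b \<in> D then c b else \<zero>\<^bsub>M\<^esub>)" for b
      define c1 where "c1 b = (if b \<in> D' then c' b else \<zero>\<^bsub>M\<^esub>)" for b
      have c0: "c0 \<in> D \<union> D' \<rightarrow> carrier M" using D(3) unfolding c0_def by auto
      have c1: "c1 \<in> D \<union> D' \<rightarrow> carrier M" using D'(3) unfolding c1_def by auto
      have E: "finite (D \<union> D')" "D \<union> D' \<subseteq> carrier B" using D D' by auto
      have x': "x = finsum N (\<lambda>b. \<phi> (c0 b) b) (D \<union> D')"
        unfolding D(4)
        by (rule N.add.finprod_mono_neutral_cong_right[symmetric])
           (use E c0 fPi[OF E(2) c0] bilinear_zero1[OF RM RB RN BL] in \<open>auto simp: c0_def\<close>)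
      have y': "y = finsum N (\<lambda>b. \<phi> (c1 b) b) (D \<union> D')"
        unfolding D'(4)
        by (rule N.add.finprod_mono_neutral_cong_right[symmetric])
           (use E c1 fPi[OF E(2) c1] bilinear_zero1[OF RM RB RN BL] in \<open>auto simp: c1_def\<close>)
      have "x \<oplus>\<^bsub>N\<^esub> y = finsum N (\<lambda>b. \<phi> (c0 b) b \<oplus>\<^bsub>N\<^esub> \<phi> (c1 b) b) (D \<union> D')"
        unfolding x' y' by (rule N.finsum_addf[symmetric]) (use fPi[OF E(2) c0] fPi[OF E(2) c1] in auto)
      also have "\<dots> = finsum N (\<lambda>b. \<phi> (c0 b \<oplus>\<^bsub>M\<^esub> c1 b) b) (D \<union> D')"
        by (rule N.finsum_cong') (use E c0 c1 phiadd phiC in \<open>auto simp: Pi_iff subset_iff\<close>)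
      finally show ?thesis unfolding N0_def using E c0 c1
        by (intro CollectI exI[where x="D \<union> D'"] exI[where x="\<lambda>b. c0 b \<oplus>\<^bsub>M\<^esub> c1 b"]) auto
    qed
    have N0neg: "\<ominus>\<^bsub>N\<^esub> x \<in> N0" if x: "x \<in> N0" for x
    proof -
      have "\<ominus>\<^bsub>N\<^esub> x = (\<ominus>\<^bsub>R\<^esub> \<one>\<^bsub>R\<^esub>) \<odot>\<^bsub>N\<^esub> x" using x N0sub by (auto simp: N.smult_l_minus)
      then show ?thesis using N0smult x by simp
    qed
    have sub: "submodule N0 R N"
      by (rule N.submoduleI) (use N0sub N0zero N0neg N0add N0smult in auto)
    have mod0: "module R (N\<lparr>carrier := N0\<rparr>)"
      by (rule submodule.submodule_is_module[OF sub RN])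
    define e where "e x = {\<chi>. \<exists>D c. finite D \<and> D \<subseteq> carrier B \<and> c \<in> D \<rightarrow> carrier M \<and> x = finsum N (\<lambda>b. \<phi> (c b) b) D
        \<and> \<chi> = (\<lambda>(m,b). if b \<in> D \<and> m = c b then \<one>\<^bsub>R\<^esub> else \<zero>\<^bsub>R\<^esub>)}" for x
    have inj: "inj_on e N0"
    proof (rule inj_onI)
      fix x y assume x: "x \<in> N0" and y: "y \<in> N0" and exy: "e x = e y"
      obtain D c where D: "finite D" "D \<subseteq> carrier B" "c \<in> D \<rightarrow> carrier M" "x = finsum N (\<lambda>b. \<phi> (c b) b) D"
        using x unfolding N0_def by blast
      define \<chi> where "\<chi> = (\<lambda>(m,b). if b \<in> D \<and> m = c b then \<one>\<^bsub>R\<^esub> else \<zero>\<^bsub>R\<^esub>)"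
      have "\<chi> \<in> e x" unfolding e_def \<chi>_def using D by blast
      then have "\<chi> \<in> e y" using exy by simp
      then obtain D' c' where D': "finite D'" "D' \<subseteq> carrier B" "c' \<in> D' \<rightarrow> carrier M" "y = finsum N (\<lambda>b. \<phi> (c' b) b) D'"
        and chi: "\<chi> = (\<lambda>(m,b). if b \<in> D' \<and> m = c' b then \<one>\<^bsub>R\<^esub> else \<zero>\<^bsub>R\<^esub>)"
        unfolding e_def by blast
      have key: "\<And>m b. (b \<in> D \<and> m = c b) \<longleftrightarrow> (b \<in> D' \<and> m = c' b)"
      proof -
        fix m b
        have "\<chi> (m,b) = (if b \<in> D' \<and> m = c' b then \<one>\<^bsub>R\<^esub> else \<zero>\<^bsub>R\<^esub>)" using chi by simp
        moreover have "\<chi> (m,b) = (if b \<in> D \<and> m = c b then \<one>\<^bsub>R\<^esub> else \<zero>\<^bsub>R\<^esub>)" unfolding \<chi>_def by simp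
        ultimately show "(b \<in> D \<and> m = c b) \<longleftrightarrow> (b \<in> D' \<and> m = c' b)" using False by (auto split: if_splits)
      qed
      have DD: "D = D'" using key by blast
      have cc: "\<And>b. b \<in> D \<Longrightarrow> c b = c' b" using key by blast
      show "x = y" unfolding D(4) D'(4) DD[symmetric]
        by (rule N.finsum_cong') (use cc fPi[OF D'(2) D'(3)] DD in auto)
    qed
    let ?N' = "transp (N\<lparr>carrier := N0\<rparr>) e"
    have modN': "module R ?N'" by (rule transp_module[OF mod0]) (use inj in simp)
    have ie: "\<And>x. x \<in> N0 \<Longrightarrow> inv_into N0 e (e x) = x" using inj by (simp add: inv_into_f_f)
    have phiN0: "\<phi> m b \<in> N0" if "m \<in> carrier M" "b \<in> carrier B" for m b
    proof -
      have "finsum N (\<lambda>b. \<phi> ((\<lambda>_. m) b) b) {b} = \<phi> m b"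
        using that phiC by (simp add: N.finsum_insert)
      then show ?thesis unfolding N0_def using that
        by (intro CollectI exI[where x="{b}"] exI[where x="\<lambda>_. m"]) auto
    qed
    have BL': "bilinear_map R M B ?N' (\<lambda>m b. e (\<phi> m b))"
      unfolding bilinear_map_def transp_simps
      using phiN0 ie phiadd phiadd2 phism phism2 by (auto simp: M.add.m_closed B.add.m_closed)
    obtain \<psi>' where psi': "mod_hom R T ?N' \<psi>'" "\<forall>m\<in>carrier M. \<forall>b\<in>carrier B. \<psi>' (\<tau> m b) = e (\<phi> m b)"
      using tensor_product_UP[OF TP modN' BL'] by blast
    define \<psi> where "\<psi> x = inv_into N0 e (\<psi>' x)" for x
    have psiC: "\<And>x. x \<in> carrier T \<Longrightarrow> \<psi>' x \<in> e ` N0"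
      using mod_hom_closed[OF psi'(1)] by (simp add: transp_simps)
    have psiN0: "\<And>x. x \<in> carrier T \<Longrightarrow> \<psi> x \<in> N0"
      unfolding \<psi>_def using psiC by (meson inv_into_into)
    have epsi: "\<And>x. x \<in> carrier T \<Longrightarrow> e (\<psi> x) = \<psi>' x"
      unfolding \<psi>_def using psiC by (simp add: f_inv_into_f)
    have "mod_hom R T N \<psi>"
      unfolding mod_hom_def
    proof (intro conjI ballI)
      show "\<psi> \<in> carrier T \<rightarrow> carrier N" using psiN0 N0sub by blast
    next
      fix x y assume x: "x \<in> carrier T" and y: "y \<in> carrier T"
      have "\<psi>' (x \<oplus>\<^bsub>T\<^esub> y) = e (\<psi> x \<oplus>\<^bsub>N\<^esub> \<psi> y)"
        using mod_hom_add[OF psi'(1) x y] by (simp add: transp_simps \<psi>_def)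
      then show "\<psi> (x \<oplus>\<^bsub>T\<^esub> y) = \<psi> x \<oplus>\<^bsub>N\<^esub> \<psi> y"
        unfolding \<psi>_def using ie N0add psiN0 x y unfolding \<psi>_def by simp
    next
      fix r x assume r: "r \<in> carrier R" and x: "x \<in> carrier T"
      have "\<psi>' (r \<odot>\<^bsub>T\<^esub> x) = e (r \<odot>\<^bsub>N\<^esub> \<psi> x)"
        using mod_hom_smult[OF psi'(1) r x] by (simp add: transp_simps \<psi>_def)
      then show "\<psi> (r \<odot>\<^bsub>T\<^esub> x) = r \<odot>\<^bsub>N\<^esub> \<psi> x"
        unfolding \<psi>_def using ie N0smult psiN0 r x unfolding \<psi>_def by simp
    qed
    moreover have "\<forall>m\<in>carrier M. \<forall>b\<in>carrier B. \<psi> (\<tau> m b) = \<phi> m b"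
      using psi'(2) ie phiN0 unfolding \<psi>_def by simp
    ultimately show ?thesis by blast
  qed
qed


lemma bilinear_comp2:
  assumes "bilinear_map R M A N \<phi>" "mod_hom R B A h"
  shows "bilinear_map R M B N (\<lambda>m b. \<phi> m (h b))"
  using assms unfolding bilinear_map_def mod_hom_def by (auto simp: Pi_iff)

lemma eq_of_diff_zero:
  assumes "abelian_group G" "x \<in> carrier G" "y \<in> carrier G" "x \<oplus>\<^bsub>G\<^esub> \<ominus>\<^bsub>G\<^esub> y = \<zero>\<^bsub>G\<^esub>"
  shows "x = y"
proof -
  interpret G: abelian_group G by fact
  have "\<ominus>\<^bsub>G\<^esub> (\<ominus>\<^bsub>G\<^esub> y) = x" using assms by (intro G.minus_equality) auto
  then show ?thesis using assms by (simp add: G.minus_minus)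
qed

theorem proposition2p3:
  fixes R :: "'r ring" and S :: "'r set"
    and A :: "('r, 'a) module" and B :: "('r, 'b) module" and C :: "('r, 'c) module"
    and f :: "'a \<Rightarrow> 'b" and g :: "'b \<Rightarrow> 'c"
  assumes "cring R"
    and "mult_subset R S"
    and "module R A" and "module R B" and "module R C"
    and "mod_hom R A B f" and "mod_hom R B C g"
    and "u_S_exact R S A B C f g"
    and "u_S_split R S A B f"
  shows "\<forall>(M :: ('r, 'm) module)
            (TA :: ('r, 'ta) module) tA (TB :: ('r, 'tb) module) tB (TC :: ('r, 'tc) module) tC
            (F :: 'ta \<Rightarrow> 'tb) (G :: 'tb \<Rightarrow> 'tc).
           module R M \<and>
           tensor_product R M A TA tA \<and> tensor_product R M B TB tB \<and> tensor_product R M C TC tC \<and>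
           mod_hom R TA TB F \<and> (\<forall>m\<in>carrier M. \<forall>a\<in>carrier A. F (tA m a) = tB m (f a)) \<and>
           mod_hom R TB TC G \<and> (\<forall>m\<in>carrier M. \<forall>b\<in>carrier B. G (tB m b) = tC m (g b))
           \<longrightarrow> u_S_exact R S TA TB TC F G"
proof (intro allI impI)
  fix M :: "('r, 'm) module" and TA :: "('r, 'ta) module" and tA and TB :: "('r, 'tb) module" and tB
    and TC :: "('r, 'tc) module" and tC and F :: "'ta \<Rightarrow> 'tb" and G :: "'tb \<Rightarrow> 'tc"
  assume H: "module R M \<and>
           tensor_product R M A TA tA \<and> tensor_product R M B TB tB \<and> tensor_product R M C TC tC \<and>
           mod_hom R TA TB F \<and> (\<forall>m\<in>carrier M. \<forall>a\<in>carrier A. F (tA m a) = tB m (f a)) \<and>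
           mod_hom R TB TC G \<and> (\<forall>m\<in>carrier M. \<forall>b\<in>carrier B. G (tB m b) = tC m (g b))"
  then have RM: "module R M" and TPA: "tensor_product R M A TA tA" and TPB: "tensor_product R M B TB tB"
    and TPC: "tensor_product R M C TC tC" and homF: "mod_hom R TA TB F"
    and Fgen: "\<And>m a. m\<in>carrier M \<Longrightarrow> a\<in>carrier A \<Longrightarrow> F (tA m a) = tB m (f a)"
    and homG: "mod_hom R TB TC G"
    and Ggen: "\<And>m b. m\<in>carrier M \<Longrightarrow> b\<in>carrier B \<Longrightarrow> G (tB m b) = tC m (g b)"
    by auto
  note RA = assms(3) and RB = assms(4) and RC = assms(5) and homf = assms(6) and homg = assms(7)
  have RTA: "module R TA" and BLA: "bilinear_map R M A TA tA" using tensor_productD(1,2)[OF TPA] by auto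
  have RTB: "module R TB" and BLB: "bilinear_map R M B TB tB" using tensor_productD(1,2)[OF TPB] by auto
  have RTC: "module R TC" and BLC: "bilinear_map R M C TC tC" using tensor_productD(1,2)[OF TPC] by auto
  interpret R: cring R by fact
  interpret A: module R A by fact
  interpret B: module R B by fact
  interpret C: module R C by fact
  interpret M: module R M by fact
  interpret TA: module R TA by fact
  interpret TB: module R TB by fact
  interpret TC: module R TC by fact
  have tAsm: "\<And>r m a. r\<in>carrier R \<Longrightarrow> m\<in>carrier M \<Longrightarrow> a\<in>carrier A \<Longrightarrow> tA m (r \<odot>\<^bsub>A\<^esub> a) = r \<odot>\<^bsub>TA\<^esub> tA m a"
    using BLA unfolding bilinear_map_def by blast
  have tBsm: "\<And>r m a. r\<in>carrier R \<Longrightarrow> m\<in>carrier M \<Longrightarrow> a\<in>carrier B \<Longrightarrow> tB m (r \<odot>\<^bsub>B\<^esub> a) = r \<odot>\<^bsub>TB\<^esub> tB m a"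
    using BLB unfolding bilinear_map_def by blast
  have tCsm: "\<And>r m a. r\<in>carrier R \<Longrightarrow> m\<in>carrier M \<Longrightarrow> a\<in>carrier C \<Longrightarrow> tC m (r \<odot>\<^bsub>C\<^esub> a) = r \<odot>\<^bsub>TC\<^esub> tC m a"
    using BLC unfolding bilinear_map_def by blast
  have tBadd: "\<And>m a1 a2. m\<in>carrier M \<Longrightarrow> a1\<in>carrier B \<Longrightarrow> a2\<in>carrier B \<Longrightarrow> tB m (a1 \<oplus>\<^bsub>B\<^esub> a2) = tB m a1 \<oplus>\<^bsub>TB\<^esub> tB m a2"
    using BLB unfolding bilinear_map_def by blast
  have tAC: "\<And>m a. m\<in>carrier M \<Longrightarrow> a\<in>carrier A \<Longrightarrow> tA m a \<in> carrier TA"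
    using BLA unfolding bilinear_map_def by blast
  have tBC: "\<And>m a. m\<in>carrier M \<Longrightarrow> a\<in>carrier B \<Longrightarrow> tB m a \<in> carrier TB"
    using BLB unfolding bilinear_map_def by blast
  have tCC: "\<And>m a. m\<in>carrier M \<Longrightarrow> a\<in>carrier C \<Longrightarrow> tC m a \<in> carrier TC"
    using BLC unfolding bilinear_map_def by blast
  obtain s where sS: "s \<in> S"
    and ex3: "\<forall>x\<in>mod_im A f. s \<odot>\<^bsub>B\<^esub> x \<in> mod_ker B C g"
    and ex2: "\<forall>x\<in>mod_ker B C g. s \<odot>\<^bsub>B\<^esub> x \<in> mod_im A f"
    and ex4: "\<forall>x\<in>carrier C. s \<odot>\<^bsub>C\<^esub> x \<in> mod_im B g"
    using assms(8) unfolding u_S_exact_def by blast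
  obtain s1 t where s1S: "s1 \<in> S" and homt: "mod_hom R B A t" and tf: "\<And>a. a\<in>carrier A \<Longrightarrow> t (f a) = s1 \<odot>\<^bsub>A\<^esub> a"
    using assms(9) unfolding u_S_split_def by blast
  have Ssub: "S \<subseteq> carrier R" and Smul: "\<And>x y. x\<in>S \<Longrightarrow> y\<in>S \<Longrightarrow> x \<otimes>\<^bsub>R\<^esub> y \<in> S"
    using assms(2) unfolding mult_subset_def by auto
  have sR: "s \<in> carrier R" and s1R: "s1 \<in> carrier R" using sS s1S Ssub by auto
  have fC: "\<And>a. a \<in> carrier A \<Longrightarrow> f a \<in> carrier B" using homf by (rule mod_hom_closed)
  have gC: "\<And>a. a \<in> carrier B \<Longrightarrow> g a \<in> carrier C" using homg by (rule mod_hom_closed)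
  have tC': "\<And>a. a \<in> carrier B \<Longrightarrow> t a \<in> carrier A" using homt by (rule mod_hom_closed)
  have comm: "\<And>N r q x. module R N \<Longrightarrow> r \<in> carrier R \<Longrightarrow> q \<in> carrier R \<Longrightarrow> x \<in> carrier N \<Longrightarrow>
      r \<odot>\<^bsub>N\<^esub> (q \<odot>\<^bsub>N\<^esub> x) = q \<odot>\<^bsub>N\<^esub> (r \<odot>\<^bsub>N\<^esub> x)"
    by (metis R.m_comm module.smult_assoc1)
  define n1 where "n1 = \<ominus>\<^bsub>R\<^esub> \<one>\<^bsub>R\<^esub>"
  have n1R: "n1 \<in> carrier R" unfolding n1_def by simp
  have n1B: "\<And>x. x \<in> carrier B \<Longrightarrow> n1 \<odot>\<^bsub>B\<^esub> x = \<ominus>\<^bsub>B\<^esub> x"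
    unfolding n1_def by (simp add: B.smult_l_minus)
  define \<pi> where "\<pi> b = s1 \<odot>\<^bsub>B\<^esub> b \<oplus>\<^bsub>B\<^esub> n1 \<odot>\<^bsub>B\<^esub> f (t b)" for b
  have hompi: "mod_hom R B B \<pi>"
    unfolding \<pi>_def
    by (rule mod_hom_plus[OF RB RB mod_hom_scal[OF RB s1R]
          mod_hom_comp[OF mod_hom_comp[OF homt homf] mod_hom_scal[OF RB n1R]]])
  have piC: "\<And>b. b \<in> carrier B \<Longrightarrow> \<pi> b \<in> carrier B" using hompi by (rule mod_hom_closed)
  have pif: "\<pi> (f a) = \<zero>\<^bsub>B\<^esub>" if a: "a \<in> carrier A" for a
  proof -
    have "f (t (f a)) = s1 \<odot>\<^bsub>B\<^esub> f a" using tf[OF a] mod_hom_smult[OF homf s1R a] by simp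
    then show ?thesis unfolding \<pi>_def using a fC s1R by (simp add: n1B B.r_neg)
  qed
  have wd: "s \<odot>\<^bsub>B\<^esub> \<pi> b = s \<odot>\<^bsub>B\<^esub> \<pi> b'" if b: "b \<in> carrier B" "b' \<in> carrier B" "g b = g b'" for b b'
  proof -
    define k where "k = b \<oplus>\<^bsub>B\<^esub> \<ominus>\<^bsub>B\<^esub> b'"
    have kC: "k \<in> carrier B" unfolding k_def using b by simp
    have "g k = g b \<oplus>\<^bsub>C\<^esub> \<ominus>\<^bsub>C\<^esub> g b'"
      unfolding k_def using b mod_hom_add[OF homg] mod_hom_neg[OF RB RC homg] by simp
    then have "g k = \<zero>\<^bsub>C\<^esub>" using b gC by (simp add: C.r_neg)
    then have "k \<in> mod_ker B C g" unfolding mod_ker_def using kC by simp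
    then have "s \<odot>\<^bsub>B\<^esub> k \<in> mod_im A f" using ex2 by blast
    then obtain a where a: "a \<in> carrier A" "s \<odot>\<^bsub>B\<^esub> k = f a" unfolding mod_im_def by blast
    have "\<zero>\<^bsub>B\<^esub> = \<pi> (s \<odot>\<^bsub>B\<^esub> k)" using pif[OF a(1)] a(2) by simp
    also have "\<dots> = s \<odot>\<^bsub>B\<^esub> \<pi> k" using mod_hom_smult[OF hompi sR kC] .
    also have "\<pi> k = \<pi> b \<oplus>\<^bsub>B\<^esub> \<ominus>\<^bsub>B\<^esub> \<pi> b'"
      unfolding k_def using b mod_hom_add[OF hompi] mod_hom_neg[OF RB RB hompi] by simp
    finally have "s \<odot>\<^bsub>B\<^esub> \<pi> b \<oplus>\<^bsub>B\<^esub> \<ominus>\<^bsub>B\<^esub> (s \<odot>\<^bsub>B\<^esub> \<pi> b') = \<zero>\<^bsub>B\<^esub>"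
      using b piC sR by (simp add: B.smult_r_distr B.smult_r_minus)
    then show ?thesis by (rule eq_of_diff_zero[OF B.abelian_group_axioms, rotated 2]) (use b piC sR in auto)
  qed
  define pre where "pre c = (SOME b. b \<in> carrier B \<and> g b = s \<odot>\<^bsub>C\<^esub> c)" for c
  have pre: "pre c \<in> carrier B \<and> g (pre c) = s \<odot>\<^bsub>C\<^esub> c" if c: "c \<in> carrier C" for c
  proof -
    have "\<exists>b. b \<in> carrier B \<and> g b = s \<odot>\<^bsub>C\<^esub> c" using ex4 c unfolding mod_im_def by force
    then show ?thesis unfolding pre_def by (rule someI_ex)
  qed
  define \<sigma> where "\<sigma> c = s \<odot>\<^bsub>B\<^esub> \<pi> (pre c)" for c
  have homsig: "mod_hom R C B \<sigma>"
    unfolding mod_hom_def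
  proof (intro conjI ballI)
    show "\<sigma> \<in> carrier C \<rightarrow> carrier B" unfolding \<sigma>_def using pre piC sR by auto
  next
    fix x y assume x: "x \<in> carrier C" and y: "y \<in> carrier C"
    have "g (pre x \<oplus>\<^bsub>B\<^esub> pre y) = g (pre (x \<oplus>\<^bsub>C\<^esub> y))"
      using pre[OF x] pre[OF y] pre[of "x \<oplus>\<^bsub>C\<^esub> y"] x y sR mod_hom_add[OF homg] by (simp add: C.smult_r_distr)
    then have "\<sigma> (x \<oplus>\<^bsub>C\<^esub> y) = s \<odot>\<^bsub>B\<^esub> \<pi> (pre x \<oplus>\<^bsub>B\<^esub> pre y)"
      unfolding \<sigma>_def using wd pre[OF x] pre[OF y] pre[of "x \<oplus>\<^bsub>C\<^esub> y"] x y by simp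
    then show "\<sigma> (x \<oplus>\<^bsub>C\<^esub> y) = \<sigma> x \<oplus>\<^bsub>B\<^esub> \<sigma> y"
      unfolding \<sigma>_def using pre[OF x] pre[OF y] mod_hom_add[OF hompi] piC sR by (simp add: B.smult_r_distr)
  next
    fix r x assume r: "r \<in> carrier R" and x: "x \<in> carrier C"
    have "g (r \<odot>\<^bsub>B\<^esub> pre x) = g (pre (r \<odot>\<^bsub>C\<^esub> x))"
      using pre[OF x] pre[of "r \<odot>\<^bsub>C\<^esub> x"] x r sR mod_hom_smult[OF homg] comm[OF RC] by simp
    then have "\<sigma> (r \<odot>\<^bsub>C\<^esub> x) = s \<odot>\<^bsub>B\<^esub> \<pi> (r \<odot>\<^bsub>B\<^esub> pre x)"
      unfolding \<sigma>_def using wd pre[OF x] pre[of "r \<odot>\<^bsub>C\<^esub> x"] x r by simp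
    then show "\<sigma> (r \<odot>\<^bsub>C\<^esub> x) = r \<odot>\<^bsub>B\<^esub> \<sigma> x"
      unfolding \<sigma>_def using pre[OF x] mod_hom_smult[OF hompi] piC sR r comm[OF RB] by simp
  qed
  have sigg: "\<sigma> (g b) = (s \<otimes>\<^bsub>R\<^esub> s) \<odot>\<^bsub>B\<^esub> \<pi> b" if b: "b \<in> carrier B" for b
  proof -
    have "g (pre (g b)) = g (s \<odot>\<^bsub>B\<^esub> b)" using pre[of "g b"] gC b sR mod_hom_smult[OF homg] by simp
    then have "\<sigma> (g b) = s \<odot>\<^bsub>B\<^esub> \<pi> (s \<odot>\<^bsub>B\<^esub> b)"
      unfolding \<sigma>_def using wd pre[of "g b"] gC b sR by simp
    then show ?thesis using mod_hom_smult[OF hompi sR b] piC b sR by (simp add: B.smult_assoc1)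
  qed
  define ss where "ss = s \<otimes>\<^bsub>R\<^esub> s"
  have ssR: "ss \<in> carrier R" unfolding ss_def using sR by simp
  define s2 where "s2 = ss \<otimes>\<^bsub>R\<^esub> s1"
  have s2R: "s2 \<in> carrier R" unfolding s2_def using ssR s1R by simp
  have s2S: "s2 \<in> S" unfolding s2_def ss_def using Smul sS s1S by blast
  have keyB: "s2 \<odot>\<^bsub>B\<^esub> b = \<sigma> (g b) \<oplus>\<^bsub>B\<^esub> f (ss \<odot>\<^bsub>A\<^esub> t b)" if b: "b \<in> carrier B" for b
  proof -
    define u where "u = ss \<odot>\<^bsub>B\<^esub> f (t b)"
    have uC: "u \<in> carrier B" unfolding u_def using b tC' fC ssR by simp
    have fu: "f (ss \<odot>\<^bsub>A\<^esub> t b) = u" unfolding u_def using mod_hom_smult[OF homf ssR tC'[OF b]] .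
    have "\<sigma> (g b) = s2 \<odot>\<^bsub>B\<^esub> b \<oplus>\<^bsub>B\<^esub> \<ominus>\<^bsub>B\<^esub> u"
      unfolding sigg[OF b] \<pi>_def ss_def[symmetric] s2_def u_def
      using b tC' fC ssR s1R n1R comm[OF RB, of ss n1]
      by (simp add: B.smult_r_distr B.smult_assoc1 n1B)
    then show ?thesis using fu uC b s2R by (simp add: B.a_assoc B.l_neg)
  qed
  obtain \<Psi> where homPsi: "mod_hom R TB TA \<Psi>" and Psigen: "\<forall>m\<in>carrier M. \<forall>b\<in>carrier B. \<Psi> (tB m b) = tA m (t b)"
    using UP_general[OF RM RB TPB RTA bilinear_comp2[OF BLA homt]] by blast
  obtain \<Sigma> where homSig: "mod_hom R TC TB \<Sigma>" and Siggen: "\<forall>m\<in>carrier M. \<forall>c\<in>carrier C. \<Sigma> (tC m c) = tB m (\<sigma> c)"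
    using UP_general[OF RM RC TPC RTB bilinear_comp2[OF BLB homsig]] by blast
  have E1: "\<Psi> (F x) = s1 \<odot>\<^bsub>TA\<^esub> x" if x: "x \<in> carrier TA" for x
    by (rule tensor_ext[OF RTA RTA TPA mod_hom_comp[OF homF homPsi] mod_hom_scal[OF RTA s1R] _ x])
       (simp add: Fgen Psigen fC tf tAsm s1R)
  have E2: "G (F (s \<odot>\<^bsub>TA\<^esub> x)) = \<zero>\<^bsub>TC\<^esub>" if x: "x \<in> carrier TA" for x
  proof (rule tensor_ext[OF RTA RTC TPA mod_hom_comp[OF mod_hom_scal[OF RTA sR] mod_hom_comp[OF homF homG]] mod_hom_0[OF RTC] _ x])
    fix m a assume m: "m \<in> carrier M" and a: "a \<in> carrier A"
    have "f a \<in> mod_im A f" unfolding mod_im_def using a by simp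
    then have "s \<odot>\<^bsub>B\<^esub> f a \<in> mod_ker B C g" using ex3 by blast
    then have "g (f (s \<odot>\<^bsub>A\<^esub> a)) = \<zero>\<^bsub>C\<^esub>" unfolding mod_ker_def using mod_hom_smult[OF homf sR a] by simp
    then show "G (F (s \<odot>\<^bsub>TA\<^esub> tA m a)) = \<zero>\<^bsub>TC\<^esub>"
      using m a sR tAsm[symmetric] Fgen Ggen fC bilinear_zero2[OF RM RC RTC BLC m] by simp
  qed
  have E3: "s2 \<odot>\<^bsub>TB\<^esub> y = \<Sigma> (G y) \<oplus>\<^bsub>TB\<^esub> F (ss \<odot>\<^bsub>TA\<^esub> \<Psi> y)" if y: "y \<in> carrier TB" for y
  proof (rule tensor_ext[OF RTB RTB TPB mod_hom_scal[OF RTB s2R]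
        mod_hom_plus[OF RTB RTB mod_hom_comp[OF homG homSig] mod_hom_comp[OF homPsi mod_hom_comp[OF mod_hom_scal[OF RTA ssR] homF]]] _ y])
    fix m b assume m: "m \<in> carrier M" and b: "b \<in> carrier B"
    have "\<Sigma> (G (tB m b)) \<oplus>\<^bsub>TB\<^esub> F (ss \<odot>\<^bsub>TA\<^esub> \<Psi> (tB m b)) = tB m (\<sigma> (g b)) \<oplus>\<^bsub>TB\<^esub> tB m (f (ss \<odot>\<^bsub>A\<^esub> t b))"
      using m b Ggen Siggen Psigen Fgen gC tC' ssR tAsm[symmetric] by simp
    also have "\<dots> = tB m (s2 \<odot>\<^bsub>B\<^esub> b)"
      using keyB[OF b] tBadd m b gC tC' ssR fC mod_hom_closed[OF homsig] by simp
    also have "\<dots> = s2 \<odot>\<^bsub>TB\<^esub> tB m b" using tBsm m b s2R by simp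
    finally show "s2 \<odot>\<^bsub>TB\<^esub> tB m b = \<Sigma> (G (tB m b)) \<oplus>\<^bsub>TB\<^esub> F (ss \<odot>\<^bsub>TA\<^esub> \<Psi> (tB m b))" by simp
  qed
  have E4: "s \<odot>\<^bsub>TC\<^esub> x \<in> mod_im TB G" if x: "x \<in> carrier TC" for x
  proof -
    let ?X = "{tC m a | m a. m \<in> carrier M \<and> a \<in> carrier C}"
    note ceq = tensor_product_mem[OF TPC]
    have gen: "s \<odot>\<^bsub>TC\<^esub> h \<in> mod_im TB G" if h: "h \<in> ?X" for h
    proof -
      obtain m c where mc: "m \<in> carrier M" "c \<in> carrier C" "h = tC m c" using h by blast
      obtain b where b: "b \<in> carrier B" "s \<odot>\<^bsub>C\<^esub> c = g b" using ex4 mc(2) unfolding mod_im_def by blast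
      have "s \<odot>\<^bsub>TC\<^esub> h = s \<odot>\<^bsub>TC\<^esub> tC m c" by (simp only: mc(3))
      also have "\<dots> = tC m (s \<odot>\<^bsub>C\<^esub> c)" by (rule tCsm[OF sR mc(1) mc(2), symmetric])
      also have "\<dots> = tC m (g b)" by (simp only: b(2))
      also have "\<dots> = G (tB m b)" by (rule Ggen[OF mc(1) b(1), symmetric])
      finally have "s \<odot>\<^bsub>TC\<^esub> h = G (tB m b)" .
      moreover have "tB m b \<in> carrier TB" by (rule tBC[OF mc(1) b(1)])
      ultimately show ?thesis unfolding mod_im_def by (rule rev_image_eqI[rotated])
    qed
    have "x \<in> generate (add_monoid TC) ?X" using x ceq by (simp only:)
    then show ?thesis
    proof (induction x rule: generate.induct)
      case one
      have G0: "G \<zero>\<^bsub>TB\<^esub> = \<zero>\<^bsub>TC\<^esub>" by (rule mod_hom_zero[OF RTB RTC homG])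
      have "s \<odot>\<^bsub>TC\<^esub> \<one>\<^bsub>add_monoid TC\<^esub> = s \<odot>\<^bsub>TC\<^esub> \<zero>\<^bsub>TC\<^esub>" by simp
      also have "\<dots> = \<zero>\<^bsub>TC\<^esub>" by (rule TC.smult_r_null[OF sR])
      also have "\<dots> = G \<zero>\<^bsub>TB\<^esub>" by (rule G0[symmetric])
      finally have "s \<odot>\<^bsub>TC\<^esub> \<one>\<^bsub>add_monoid TC\<^esub> = G \<zero>\<^bsub>TB\<^esub>" .
      moreover have "\<zero>\<^bsub>TB\<^esub> \<in> carrier TB" by (rule TB.zero_closed)
      ultimately show ?case unfolding mod_im_def by (rule rev_image_eqI[rotated])
    next
      case (incl h)
      show ?case by (rule gen[OF incl])
    next
      case (inv h)
      have hX: "h \<in> ?X" by (rule inv)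
      obtain y where y: "y \<in> carrier TB" "s \<odot>\<^bsub>TC\<^esub> h = G y"
        using gen[OF hX] unfolding mod_im_def by (auto simp del: mem_Collect_eq)
      have "h \<in> generate (add_monoid TC) ?X" by (rule generate.incl[OF hX])
      then have hC: "h \<in> carrier TC" using ceq by (simp only:)
      have "inv\<^bsub>add_monoid TC\<^esub> h = \<ominus>\<^bsub>TC\<^esub> h" by (simp add: a_inv_def)
      then have "s \<odot>\<^bsub>TC\<^esub> inv\<^bsub>add_monoid TC\<^esub> h = \<ominus>\<^bsub>TC\<^esub> (s \<odot>\<^bsub>TC\<^esub> h)"
        using TC.smult_r_minus[OF sR hC] by (simp only:)
      also have "\<dots> = \<ominus>\<^bsub>TC\<^esub> G y" by (simp only: y(2))
      also have "\<dots> = G (\<ominus>\<^bsub>TB\<^esub> y)" by (rule mod_hom_neg[OF RTB RTC homG y(1), symmetric])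
      finally have "s \<odot>\<^bsub>TC\<^esub> inv\<^bsub>add_monoid TC\<^esub> h = G (\<ominus>\<^bsub>TB\<^esub> y)" .
      moreover have "\<ominus>\<^bsub>TB\<^esub> y \<in> carrier TB" by (rule TB.a_inv_closed[OF y(1)])
      ultimately show ?case unfolding mod_im_def by (rule rev_image_eqI[rotated])
    next
      case (eng h1 h2)
      have hC: "h1 \<in> carrier TC" "h2 \<in> carrier TC" using eng.hyps(1,2) ceq by (simp_all only:)
      obtain y1 where y1: "y1 \<in> carrier TB" "s \<odot>\<^bsub>TC\<^esub> h1 = G y1" using eng.IH(1) unfolding mod_im_def by blast
      obtain y2 where y2: "y2 \<in> carrier TB" "s \<odot>\<^bsub>TC\<^esub> h2 = G y2" using eng.IH(2) unfolding mod_im_def by blast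
      have "s \<odot>\<^bsub>TC\<^esub> (h1 \<otimes>\<^bsub>add_monoid TC\<^esub> h2) = s \<odot>\<^bsub>TC\<^esub> h1 \<oplus>\<^bsub>TC\<^esub> s \<odot>\<^bsub>TC\<^esub> h2"
        using TC.smult_r_distr[OF sR hC] by simp
      also have "\<dots> = G y1 \<oplus>\<^bsub>TC\<^esub> G y2" by (simp only: y1(2) y2(2))
      also have "\<dots> = G (y1 \<oplus>\<^bsub>TB\<^esub> y2)" by (rule mod_hom_add[OF homG y1(1) y2(1), symmetric])
      finally have "s \<odot>\<^bsub>TC\<^esub> (h1 \<otimes>\<^bsub>add_monoid TC\<^esub> h2) = G (y1 \<oplus>\<^bsub>TB\<^esub> y2)" .
      moreover have "y1 \<oplus>\<^bsub>TB\<^esub> y2 \<in> carrier TB" by (rule TB.add.m_closed[OF y1(1) y2(1)])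
      ultimately show ?case unfolding mod_im_def by (rule rev_image_eqI[rotated])
    qed
  qed
  show "u_S_exact R S TA TB TC F G"
    unfolding u_S_exact_def
  proof (rule bexI[OF _ s2S], intro conjI ballI)
    fix x assume "x \<in> mod_ker TA TB F"
    then have x: "x \<in> carrier TA" "F x = \<zero>\<^bsub>TB\<^esub>" unfolding mod_ker_def by auto
    have "s1 \<odot>\<^bsub>TA\<^esub> x = \<Psi> (F x)" using E1[OF x(1)] by (rule sym)
    also have "\<dots> = \<Psi> \<zero>\<^bsub>TB\<^esub>" using x(2) by (rule arg_cong)
    also have "\<dots> = \<zero>\<^bsub>TA\<^esub>" by (rule mod_hom_zero[OF RTB RTA homPsi])
    finally have s1x: "s1 \<odot>\<^bsub>TA\<^esub> x = \<zero>\<^bsub>TA\<^esub>" .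
    have "s2 \<odot>\<^bsub>TA\<^esub> x = ss \<odot>\<^bsub>TA\<^esub> (s1 \<odot>\<^bsub>TA\<^esub> x)" unfolding s2_def by (rule TA.smult_assoc1[OF ssR s1R x(1)])
    also have "\<dots> = \<zero>\<^bsub>TA\<^esub>" unfolding s1x by (rule TA.smult_r_null[OF ssR])
    finally show "s2 \<odot>\<^bsub>TA\<^esub> x = \<zero>\<^bsub>TA\<^esub>" .
  next
    fix x assume "x \<in> mod_ker TB TC G"
    then have x: "x \<in> carrier TB" "G x = \<zero>\<^bsub>TC\<^esub>" unfolding mod_ker_def by auto
    have PC: "ss \<odot>\<^bsub>TA\<^esub> \<Psi> x \<in> carrier TA" using mod_hom_closed[OF homPsi x(1)] ssR by (rule TA.smult_closed[rotated])
    have FC: "F (ss \<odot>\<^bsub>TA\<^esub> \<Psi> x) \<in> carrier TB" by (rule mod_hom_closed[OF homF PC])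
    have "s2 \<odot>\<^bsub>TB\<^esub> x = \<Sigma> (G x) \<oplus>\<^bsub>TB\<^esub> F (ss \<odot>\<^bsub>TA\<^esub> \<Psi> x)" by (rule E3[OF x(1)])
    also have "\<dots> = \<Sigma> \<zero>\<^bsub>TC\<^esub> \<oplus>\<^bsub>TB\<^esub> F (ss \<odot>\<^bsub>TA\<^esub> \<Psi> x)" by (simp only: x(2))
    also have "\<dots> = \<zero>\<^bsub>TB\<^esub> \<oplus>\<^bsub>TB\<^esub> F (ss \<odot>\<^bsub>TA\<^esub> \<Psi> x)" by (simp only: mod_hom_zero[OF RTC RTB homSig])
    also have "\<dots> = F (ss \<odot>\<^bsub>TA\<^esub> \<Psi> x)" by (rule TB.l_zero[OF FC])
    finally have "s2 \<odot>\<^bsub>TB\<^esub> x = F (ss \<odot>\<^bsub>TA\<^esub> \<Psi> x)" .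
    then show "s2 \<odot>\<^bsub>TB\<^esub> x \<in> mod_im TA F" unfolding mod_im_def using PC by (rule rev_image_eqI[rotated])
  next
    fix x assume "x \<in> mod_im TA F"
    then obtain a where a: "a \<in> carrier TA" "x = F a" unfolding mod_im_def by blast
    have s2': "s2 = s \<otimes>\<^bsub>R\<^esub> (s \<otimes>\<^bsub>R\<^esub> s1)" unfolding s2_def ss_def by (rule R.m_assoc[OF sR sR s1R])
    have ss1: "s \<otimes>\<^bsub>R\<^esub> s1 \<in> carrier R" using sR s1R by (rule R.m_closed)
    have yC: "(s \<otimes>\<^bsub>R\<^esub> s1) \<odot>\<^bsub>TA\<^esub> a \<in> carrier TA" using ss1 a(1) by (rule TA.smult_closed)
    have "s2 \<odot>\<^bsub>TB\<^esub> x = F (s2 \<odot>\<^bsub>TA\<^esub> a)" unfolding a(2) by (rule mod_hom_smult[OF homF s2R a(1), symmetric])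
    also have "s2 \<odot>\<^bsub>TA\<^esub> a = s \<odot>\<^bsub>TA\<^esub> ((s \<otimes>\<^bsub>R\<^esub> s1) \<odot>\<^bsub>TA\<^esub> a)" unfolding s2' by (rule TA.smult_assoc1[OF sR ss1 a(1)])
    finally have eq: "s2 \<odot>\<^bsub>TB\<^esub> x = F (s \<odot>\<^bsub>TA\<^esub> ((s \<otimes>\<^bsub>R\<^esub> s1) \<odot>\<^bsub>TA\<^esub> a))" .
    have "G (s2 \<odot>\<^bsub>TB\<^esub> x) = \<zero>\<^bsub>TC\<^esub>" unfolding eq by (rule E2[OF yC])
    moreover have "s2 \<odot>\<^bsub>TB\<^esub> x \<in> carrier TB" unfolding a(2) using s2R mod_hom_closed[OF homF a(1)] by (rule TB.smult_closed)
    ultimately show "s2 \<odot>\<^bsub>TB\<^esub> x \<in> mod_ker TB TC G" unfolding mod_ker_def by blast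
  next
    fix x assume x: "x \<in> carrier TC"
    obtain y where y: "y \<in> carrier TB" "s \<odot>\<^bsub>TC\<^esub> x = G y" using E4[OF x] unfolding mod_im_def by blast
    have ss1: "s \<otimes>\<^bsub>R\<^esub> s1 \<in> carrier R" using sR s1R by (rule R.m_closed)
    have s2': "s2 = (s \<otimes>\<^bsub>R\<^esub> s1) \<otimes>\<^bsub>R\<^esub> s" unfolding s2_def ss_def using R.m_assoc[OF sR sR s1R] R.m_comm[OF sR ss1] by simp
    have "s2 \<odot>\<^bsub>TC\<^esub> x = (s \<otimes>\<^bsub>R\<^esub> s1) \<odot>\<^bsub>TC\<^esub> (s \<odot>\<^bsub>TC\<^esub> x)" unfolding s2' by (rule TC.smult_assoc1[OF ss1 sR x])
    also have "\<dots> = (s \<otimes>\<^bsub>R\<^esub> s1) \<odot>\<^bsub>TC\<^esub> G y" by (simp only: y(2))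
    also have "\<dots> = G ((s \<otimes>\<^bsub>R\<^esub> s1) \<odot>\<^bsub>TB\<^esub> y)" by (rule mod_hom_smult[OF homG ss1 y(1), symmetric])
    finally have "s2 \<odot>\<^bsub>TC\<^esub> x = G ((s \<otimes>\<^bsub>R\<^esub> s1) \<odot>\<^bsub>TB\<^esub> y)" .
    moreover have "(s \<otimes>\<^bsub>R\<^esub> s1) \<odot>\<^bsub>TB\<^esub> y \<in> carrier TB" using ss1 y(1) by (rule TB.smult_closed)
    ultimately show "s2 \<odot>\<^bsub>TC\<^esub> x \<in> mod_im TB G" unfolding mod_im_def by (rule rev_image_eqI[rotated])
  qed
qed

end
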